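(* Let $X$ be a finite set, $\tau:\mathbb F_X\times\mathbb F_X\to\mathbb F_X$, $\tau(\omega_1,\omega_2)=\omega_1^{-1}\omega_2$. For any $S\subset\mathbb F_X$ and any $T\subset\mathbb F_X^2$: (1) $S$ is negligible if and only if $\tau^{-1}(S)$ is negligible, and $S$ is exponentially negligible if and only if $\tau^{-1}(S)$ is exponentially negligible; (2) $S$ is generic if and only if $\tau^{-1}(S)$ is generic, and $S$ is exponentially generic if and only if $\tau^{-1}(S)$ is exponentially generic; (3) if $T$ is generic (resp. exponentially generic) then $\tau(T)$ is generic (resp. exponentially generic); (4) if $\tau(T)$ is negligible (resp. exponentially negligible) then $T$ is negligible (resp. exponentially negligible).
   Context: $\mathbb F_X$ is the free group on $X$ with reduced word length $|\cdot|$; on $\mathbb F_X^k$ use the length $|(\omega_1,\dots,\omega_k)|=|\omega_1|+\dots+|\omega_k|$ and let $B_n(\mathbb F_X^k)$ be the ball of radius $n$ about the identity. $S\subset\mathbb F_X^k$ is negligible if $|S\cap B_n(\mathbb F_X^k)|/|B_n(\mathbb F_X^k)|\to0$, exponentially negligible if moreover $\beta^n|S\cap B_n(\mathbb F_X^k)|/|B_n(\mathbb F_X^k)|\to0$ for some $\beta>1$; $S$ is (exponentially) generic if its complement is (exponentially) negligible. *)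

theory Defs
  imports Complex_Main
begin

text \<open>Free group on a set X: elements are reduced words over the letters
  (x, True) (standing for x) and (x, False) (standing for x inverse), x in X.\<close>

type_synonym 'a letter = "'a \<times> bool"
type_synonym 'a word = "'a letter list"

definition inv_letter :: "'a letter \<Rightarrow> 'a letter" where
  "inv_letter l = (fst l, \<not> snd l)"

fun reduced :: "'a word \<Rightarrow> bool" where
  "reduced [] = True"
| "reduced [l] = True"
| "reduced (l # m # w) = (m \<noteq> inv_letter l \<and> reduced (m # w))"

definition free_group_elems :: "'a set \<Rightarrow> 'a word set" where
  "free_group_elems X = {w. set w \<subseteq> X \<times> UNIV \<and> reduced w}"

fun push :: "'a letter \<Rightarrow> 'a word \<Rightarrow> 'a word" where
  "push l [] = [l]"
| "push l (m # w) = (if m = inv_letter l then w else l # m # w)"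

definition fg_mult :: "'a word \<Rightarrow> 'a word \<Rightarrow> 'a word" where
  "fg_mult u v = foldr push u v"

definition fg_inv :: "'a word \<Rightarrow> 'a word" where
  "fg_inv w = rev (map inv_letter w)"

definition tau :: "'a word \<times> 'a word \<Rightarrow> 'a word" where
  "tau p = fg_mult (fg_inv (fst p)) (snd p)"

definition ball1 :: "'a set \<Rightarrow> nat \<Rightarrow> 'a word set" where
  "ball1 X n = {w \<in> free_group_elems X. length w \<le> n}"

definition ball2 :: "'a set \<Rightarrow> nat \<Rightarrow> ('a word \<times> 'a word) set" where
  "ball2 X n = {p \<in> free_group_elems X \<times> free_group_elems X. length (fst p) + length (snd p) \<le> n}"

definition negligible :: "(nat \<Rightarrow> 'b set) \<Rightarrow> 'b set \<Rightarrow> bool" where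
  "negligible B S \<longleftrightarrow>
     (\<lambda>n. real (card (S \<inter> B n)) / real (card (B n))) \<longlonglongrightarrow> 0"

definition exp_negligible :: "(nat \<Rightarrow> 'b set) \<Rightarrow> 'b set \<Rightarrow> bool" where
  "exp_negligible B S \<longleftrightarrow>
     (\<exists>\<beta>::real. \<beta> > 1 \<and>
        (\<lambda>n. \<beta> ^ n * real (card (S \<inter> B n)) / real (card (B n))) \<longlonglongrightarrow> 0)"

definition generic :: "'b set \<Rightarrow> (nat \<Rightarrow> 'b set) \<Rightarrow> 'b set \<Rightarrow> bool" where
  "generic G B S \<longleftrightarrow> negligible B (G - S)"

definition exp_generic :: "'b set \<Rightarrow> (nat \<Rightarrow> 'b set) \<Rightarrow> 'b set \<Rightarrow> bool" where
  "exp_generic G B S \<longleftrightarrow> exp_negligible B (G - S)"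

end

theory Submission
  imports Defs "HOL-Analysis.Uniform_Limit"
begin


lemma inv_inv[simp]: "inv_letter (inv_letter l) = l"
  by (simp add: inv_letter_def)
lemma inv_neq[simp]: "inv_letter l \<noteq> l" "l \<noteq> inv_letter l"
  by (auto simp: inv_letter_def prod_eq_iff)
lemma inv_eq_iff: "inv_letter a = b \<longleftrightarrow> a = inv_letter b"
  by (auto simp: inv_letter_def prod_eq_iff)

lemma reduced_Cons: "reduced (x#w) \<longleftrightarrow> reduced w \<and> (w = [] \<or> hd w \<noteq> inv_letter x)"
  by (cases w) auto

lemma reduced_append: "reduced (a@b) \<longleftrightarrow> reduced a \<and> reduced b \<and> (a = [] \<or> b = [] \<or> hd b \<noteq> inv_letter (last a))"
  by (induction a) (auto simp: reduced_Cons)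

lemma fg_inv_Cons: "fg_inv (x#w) = fg_inv w @ [inv_letter x]"
  by (simp add: fg_inv_def)
lemma fg_inv_append: "fg_inv (a@b) = fg_inv b @ fg_inv a"
  by (simp add: fg_inv_def)
lemma fg_inv_inv[simp]: "fg_inv (fg_inv w) = w"
  by (simp add: fg_inv_def rev_map comp_def)
lemma length_fg_inv[simp]: "length (fg_inv w) = length w"
  by (simp add: fg_inv_def)
lemma fg_inv_Nil[simp]: "fg_inv [] = []" "fg_inv w = [] \<longleftrightarrow> w = []"
  by (auto simp: fg_inv_def)
lemma last_fg_inv: "w \<noteq> [] \<Longrightarrow> last (fg_inv w) = inv_letter (hd w)"
  by (cases w) (auto simp: fg_inv_def)
lemma hd_fg_inv: "w \<noteq> [] \<Longrightarrow> hd (fg_inv w) = inv_letter (last w)"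
  by (simp add: fg_inv_def hd_rev hd_map last_map)

lemma reduced_fg_inv[simp]: "reduced (fg_inv w) \<longleftrightarrow> reduced w"
proof (induction w)
  case (Cons x w)
  show ?case
    by (cases "w = []") (auto simp: fg_inv_Cons reduced_append reduced_Cons Cons last_fg_inv inv_eq_iff)
qed simp

lemma set_fg_inv: "set (fg_inv w) \<subseteq> X \<times> UNIV \<longleftrightarrow> set w \<subseteq> X \<times> UNIV"
  by (auto simp: fg_inv_def inv_letter_def)

lemma fg_mult_append: "fg_mult (a@b) c = fg_mult a (fg_mult b c)"
  by (simp add: fg_mult_def)

lemma fg_mult_cancel: "fg_mult (fg_inv q) (q@w) = w"
proof (induction q)
  case (Cons x q)
  then show ?case by (simp add: fg_inv_Cons fg_mult_append) (simp add: fg_mult_def)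
qed (simp add: fg_mult_def)

lemma fg_mult_red: "reduced (a@b) \<Longrightarrow> fg_mult a b = a@b"
proof (induction a)
  case (Cons x a)
  then have "reduced (a@b)" by (simp add: reduced_Cons)
  with Cons show ?case
    by (cases "a@b") (auto simp: fg_mult_def reduced_Cons)
qed (simp add: fg_mult_def)

fun lcp :: "'a list \<Rightarrow> 'a list \<Rightarrow> 'a list" where
  "lcp (x#xs) (y#ys) = (if x = y then x # lcp xs ys else [])"
| "lcp _ _ = []"

lemma lcp_props: "take (length (lcp u v)) u = lcp u v \<and> take (length (lcp u v)) v = lcp u v
  \<and> (drop (length (lcp u v)) u = [] \<or> drop (length (lcp u v)) v = []
     \<or> hd (drop (length (lcp u v)) u) \<noteq> hd (drop (length (lcp u v)) v))"
  by (induction u v rule: lcp.induct) auto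

lemma tau_decomp:
  assumes "reduced u" "reduced v" "u = q@u'" "v = q@v'" "u' = [] \<or> v' = [] \<or> hd u' \<noteq> hd v'"
  shows "tau (u,v) = fg_inv u' @ v'" "reduced (fg_inv u' @ v')"
proof -
  have r: "reduced u'" "reduced v'" using assms by (auto simp: reduced_append)
  show red: "reduced (fg_inv u' @ v')"
    using r assms(5) by (auto simp: reduced_append last_fg_inv)
  have "tau (u,v) = fg_mult (fg_inv u') (fg_mult (fg_inv q) (q@v'))"
    by (simp add: tau_def assms fg_inv_append fg_mult_append)
  also have "\<dots> = fg_inv u' @ v'" using red by (simp add: fg_mult_cancel fg_mult_red)
  finally show "tau (u,v) = fg_inv u' @ v'" .
qed



definition sph :: "'a set \<Rightarrow> nat \<Rightarrow> 'a word set" where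
  "sph X j = {w \<in> free_group_elems X. length w = j}"
definition Est :: "'a set \<Rightarrow> nat \<Rightarrow> 'a letter \<Rightarrow> 'a word set" where
  "Est X j l = {w \<in> free_group_elems X. length w = Suc j \<and> hd w = l}"

lemma finite_ball1: "finite X \<Longrightarrow> finite (ball1 X n)"
proof -
  assume "finite X"
  have "ball1 X n \<subseteq> {w. set w \<subseteq> X \<times> UNIV \<and> length w \<le> n}"
    by (auto simp: ball1_def free_group_elems_def)
  moreover have "finite {w. set w \<subseteq> X \<times> (UNIV::bool set) \<and> length w \<le> n}"
    using \<open>finite X\<close> by (intro finite_lists_length_le) auto
  ultimately show ?thesis by (rule finite_subset)
qed

lemma sph_sub: "sph X j \<subseteq> ball1 X j" by (auto simp: sph_def ball1_def)
lemma Est_sub: "Est X j l \<subseteq> ball1 X (Suc j)" by (auto simp: Est_def ball1_def)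

lemma Est_0: "l \<in> X \<times> UNIV \<Longrightarrow> Est X 0 l = {[l]}"
  by (auto simp: Est_def free_group_elems_def length_Suc_conv)

lemma Est_Suc: "l \<in> X \<times> UNIV \<Longrightarrow> Est X (Suc j) l = (\<lambda>w. l#w) ` (\<Union>l'\<in>(X \<times> UNIV) - {inv_letter l}. Est X j l')"
proof (intro equalityI subsetI)
  fix w assume "w \<in> Est X (Suc j) l"
  then obtain w' where w: "w = l # w'" "length w' = Suc j" "reduced w'" "set w' \<subseteq> X \<times> UNIV" "hd w' \<noteq> inv_letter l"
    by (auto simp: Est_def free_group_elems_def length_Suc_conv reduced_Cons)
  then have "hd w' \<in> X \<times> UNIV" by (cases w') auto
  with w show "w \<in> (\<lambda>w. l#w) ` (\<Union>l'\<in>(X \<times> UNIV) - {inv_letter l}. Est X j l')"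
    by (auto simp: Est_def free_group_elems_def)
next
  fix w assume "l \<in> X \<times> UNIV" "w \<in> (\<lambda>w. l#w) ` (\<Union>l'\<in>(X \<times> UNIV) - {inv_letter l}. Est X j l')"
  then show "w \<in> Est X (Suc j) l"
    by (auto simp: Est_def free_group_elems_def reduced_Cons)
qed

lemma card_LX: "finite X \<Longrightarrow> card (X \<times> (UNIV::bool set)) = 2 * card X"
  by (simp add: card_cartesian_product)

lemma inv_in_LX: "l \<in> X \<times> UNIV \<Longrightarrow> inv_letter l \<in> X \<times> UNIV"
  by (auto simp: inv_letter_def)

lemma card_Est: assumes "finite X" "l \<in> X \<times> UNIV"
  shows "card (Est X j l) = (2 * card X - 1) ^ j"
  using assms(2)
proof (induction j arbitrary: l)
  case 0 then show ?case by (simp add: Est_0)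
next
  case (Suc j)
  have fin: "\<And>l'. finite (Est X j l')" using finite_subset[OF Est_sub finite_ball1[OF assms(1)]] .
  have "card (Est X (Suc j) l) = card (\<Union>l'\<in>(X \<times> UNIV) - {inv_letter l}. Est X j l')"
    by (simp add: Est_Suc[OF Suc.prems] card_image inj_on_def)
  also have "\<dots> = (\<Sum>l'\<in>(X \<times> UNIV) - {inv_letter l}. card (Est X j l'))"
    by (rule card_UN_disjoint) (use assms fin in \<open>auto simp: Est_def\<close>)
  also have "\<dots> = (\<Sum>l'\<in>(X \<times> UNIV) - {inv_letter l}. (2 * card X - 1) ^ j)"
    by (rule sum.cong) (auto simp: Suc.IH)
  also have "\<dots> = (2 * card X - 1) ^ Suc j"
    using assms inv_in_LX[OF Suc.prems] by (simp add: card_LX card_Diff_singleton mult.commute)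
  finally show ?case .
qed

lemma sph_Suc: "sph X (Suc j) = (\<Union>l\<in>X \<times> UNIV. Est X j l)"
proof (intro equalityI subsetI)
  fix w assume "w \<in> sph X (Suc j)"
  then show "w \<in> (\<Union>l\<in>X \<times> UNIV. Est X j l)"
    by (cases w) (auto simp: sph_def Est_def free_group_elems_def)
qed (auto simp: sph_def Est_def)

lemma card_sph_Suc: assumes "finite X"
  shows "card (sph X (Suc j)) = 2 * card X * (2 * card X - 1) ^ j"
proof -
  have fin: "\<And>l'. finite (Est X j l')" using finite_subset[OF Est_sub finite_ball1[OF assms(1)]] .
  have "card (sph X (Suc j)) = (\<Sum>l\<in>X \<times> UNIV. card (Est X j l))"
    unfolding sph_Suc by (rule card_UN_disjoint) (use assms fin in \<open>auto simp: Est_def\<close>)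
  also have "\<dots> = (\<Sum>l\<in>X \<times> (UNIV::bool set). (2 * card X - 1) ^ j)"
    by (rule sum.cong) (auto simp: card_Est assms)
  finally show ?thesis using assms by (simp add: card_LX)
qed

lemma sph_0: "sph X 0 = {[]}" by (auto simp: sph_def free_group_elems_def)

lemma ball1_0: "ball1 X 0 = {[]}" by (auto simp: ball1_def free_group_elems_def)

lemma ball1_Suc: "ball1 X (Suc n) = ball1 X n \<union> sph X (Suc n)"
  by (auto simp: ball1_def sph_def)

lemma card_ball1_Suc: assumes "finite X"
  shows "card (ball1 X (Suc n)) = card (ball1 X n) + 2 * card X * (2 * card X - 1) ^ n"
proof -
  have "card (ball1 X (Suc n)) = card (ball1 X n) + card (sph X (Suc n))"
    unfolding ball1_Suc
    by (rule card_Un_disjoint) (use finite_ball1[OF assms] finite_subset[OF sph_sub finite_ball1[OF assms]] in \<open>auto simp: ball1_def sph_def\<close>)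
  then show ?thesis by (simp add: card_sph_Suc assms)
qed

lemma card_ball1_lower: assumes "finite X" "X \<noteq> {}"
  shows "(2 * card X - 1) ^ n \<le> card (ball1 X n)"
proof (cases n)
  case 0 then show ?thesis by (simp add: ball1_0)
next
  case (Suc m)
  have "(2 * card X - 1) ^ n = (2 * card X - 1) * (2 * card X - 1) ^ m" by (simp add: Suc)
  also have "\<dots> \<le> 2 * card X * (2 * card X - 1) ^ m" by simp
  also have "\<dots> \<le> card (ball1 X n)" by (simp add: Suc card_ball1_Suc assms)
  finally show ?thesis .
qed

lemma card_ball1_k1: assumes "finite X" "card X = 1"
  shows "card (ball1 X n) = 2 * n + 1"
  by (induction n) (auto simp: ball1_0 card_ball1_Suc assms)

lemma card_ball1_k2: assumes "finite X" "card X \<ge> 2"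
  shows "card (ball1 X n) \<le> 3 * (2 * card X - 1) ^ n"
proof (induction n)
  case 0 then show ?case by (simp add: ball1_0)
next
  case (Suc n)
  let ?g = "(2 * card X - 1)"
  have "card (ball1 X (Suc n)) \<le> 3 * ?g ^ n + 2 * card X * ?g ^ n"
    using Suc by (simp add: card_ball1_Suc assms)
  also have "\<dots> = (3 + 2 * card X) * ?g ^ n" by (simp add: algebra_simps)
  also have "\<dots> \<le> (3 * ?g) * ?g ^ n" using assms(2) by (intro mult_right_mono) auto
  finally show ?case by simp
qed



definition fib :: "'a set \<Rightarrow> nat \<Rightarrow> 'a word \<Rightarrow> ('a word \<times> 'a word) set" where
  "fib X n s = {p \<in> ball2 X n. tau p = s}"

lemma tau_lcp:
  assumes "reduced u" "reduced v"
  defines "q \<equiv> lcp u v"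
  shows "u = q @ drop (length q) u" "v = q @ drop (length q) v"
    "tau (u,v) = fg_inv (drop (length q) u) @ drop (length q) v"
    "reduced (fg_inv (drop (length q) u) @ drop (length q) v)"
proof -
  have p: "take (length q) u = q" "take (length q) v = q"
    "drop (length q) u = [] \<or> drop (length q) v = [] \<or> hd (drop (length q) u) \<noteq> hd (drop (length q) v)"
    using lcp_props[of u v] by (auto simp: q_def)
  show u: "u = q @ drop (length q) u" using p(1) append_take_drop_id[of "length q" u] by simp
  show v: "v = q @ drop (length q) v" using p(2) append_take_drop_id[of "length q" v] by simp
  show "tau (u,v) = fg_inv (drop (length q) u) @ drop (length q) v"
       "reduced (fg_inv (drop (length q) u) @ drop (length q) v)"
    using tau_decomp[OF assms(1,2) u v p(3)] by auto
qed

lemma set_sub_append: "set (a@b) \<subseteq> A \<longleftrightarrow> set a \<subseteq> A \<and> set b \<subseteq> A" by auto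

lemma tau_F2:
  assumes "p \<in> free_group_elems X \<times> free_group_elems X"
  shows "tau p \<in> free_group_elems X" "length (tau p) \<le> length (fst p) + length (snd p)"
proof -
  obtain u v where p: "p = (u,v)" by force
  let ?q = "lcp u v"
  have r: "reduced u" "reduced v" "set u \<subseteq> X \<times> UNIV" "set v \<subseteq> X \<times> UNIV"
    using assms by (auto simp: p free_group_elems_def)
  note t = tau_lcp[OF r(1,2)]
  have "set (drop (length ?q) u) \<subseteq> X \<times> UNIV" "set (drop (length ?q) v) \<subseteq> X \<times> UNIV"
    using r(3,4) set_drop_subset by fastforce+
  then show "tau p \<in> free_group_elems X"
    using t(3,4) by (auto simp: p free_group_elems_def set_fg_inv)
  show "length (tau p) \<le> length (fst p) + length (snd p)"
    using t(3) by (simp add: p)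
qed

lemma fib_upper2:
  assumes "finite X"
  shows "card (fib X n s) \<le> (length s + 1) * card (ball1 X ((n - length s) div 2))"
proof -
  let ?r = "(n - length s) div 2"
  define \<phi> where "\<phi> = (\<lambda>p::'a word \<times> 'a word. (lcp (fst p) (snd p), length (fst p) - length (lcp (fst p) (snd p))))"
  define \<psi> where "\<psi> = (\<lambda>(q::'a word, c::nat). (q @ fg_inv (take c s), q @ drop c s))"
  have key: "\<psi> (\<phi> p) = p \<and> \<phi> p \<in> ball1 X ?r \<times> {0..length s}" if "p \<in> fib X n s" for p
  proof -
    obtain u v where p: "p = (u,v)" by force
    have r: "reduced u" "reduced v" "set u \<subseteq> X \<times> UNIV" "length u + length v \<le> n" "tau (u,v) = s"
      using that by (auto simp: p fib_def ball2_def free_group_elems_def)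
    let ?q = "lcp u v"
    note t = tau_lcp[OF r(1,2)]
    have s: "s = fg_inv (drop (length ?q) u) @ drop (length ?q) v" using t(3) r(5) by simp
    have lq: "length ?q \<le> length u" using t(1) by (metis le_add1 length_append)
    have c: "length u - length ?q = length (fg_inv (drop (length ?q) u))" by simp
    have 1: "take (length u - length ?q) s = fg_inv (drop (length ?q) u)"
      by (subst s, subst c) simp
    have 2: "drop (length u - length ?q) s = drop (length ?q) v"
      by (subst s, subst c) simp
    have lq': "length ?q \<le> length v" using t(2) by (metis le_add1 length_append)
    have "length s = length (drop (length ?q) u) + length (drop (length ?q) v)"
      by (subst s) simp
    then have len: "length u + length v = 2 * length ?q + length s"
      using lq lq' by simp
    have qred: "reduced ?q" "set ?q \<subseteq> X \<times> UNIV" using r(1,3) t(1)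
      by (metis reduced_append, metis set_sub_append)
    have "length ?q \<le> ?r" using len r(4) by linarith
    then have "?q \<in> ball1 X ?r" using qred by (simp add: ball1_def free_group_elems_def)
    moreover have "length u - length ?q \<le> length s" using len lq' by linarith
    moreover have "\<psi> (\<phi> p) = (?q @ drop (length ?q) u, ?q @ drop (length ?q) v)"
      unfolding \<psi>_def \<phi>_def p fst_conv snd_conv split 1 2 by simp
    then have "\<psi> (\<phi> p) = p" using t(1,2) p by metis
    ultimately show ?thesis by (simp add: \<phi>_def p)
  qed
  have "inj_on \<phi> (fib X n s)" by (rule inj_on_inverseI[where g = \<psi>]) (use key in auto)
  moreover have "\<phi> ` fib X n s \<subseteq> ball1 X ?r \<times> {0..length s}" using key by blast
  ultimately have "card (fib X n s) \<le> card (ball1 X ?r \<times> {0..length s})"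
    by (intro card_inj_on_le) (auto simp: finite_ball1[OF assms])
  then show ?thesis by (simp add: card_cartesian_product mult.commute)
qed

lemma push_red: "reduced v \<Longrightarrow> reduced (push l v)"
  by (cases v) (auto simp: reduced_Cons)

lemma push_inv: "reduced v \<Longrightarrow> push l (push (inv_letter l) v) = v"
proof (cases v)
  case (Cons a w)
  assume "reduced v"
  then show ?thesis using Cons by (cases w) (auto simp: inv_eq_iff)
qed simp

lemma fg_mult_red_gen: "reduced v \<Longrightarrow> reduced (fg_mult w v)"
  by (induction w) (auto simp: fg_mult_def push_red)

lemma fg_mult_inv_left: "reduced v \<Longrightarrow> fg_mult w (fg_mult (fg_inv w) v) = v"
proof (induction w arbitrary: v)
  case Nil then show ?case by (simp add: fg_mult_def)
next
  case (Cons x w)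
  have "fg_mult (x#w) (fg_mult (fg_inv (x#w)) v) = push x (fg_mult w (fg_mult (fg_inv w) (push (inv_letter x) v)))"
    by (simp add: fg_inv_Cons fg_mult_append) (simp add: fg_mult_def)
  also have "\<dots> = push x (push (inv_letter x) v)" using Cons by (simp add: push_red)
  also have "\<dots> = v" using Cons.prems by (rule push_inv)
  finally show ?case .
qed

lemma fib_upper1:
  assumes "finite X"
  shows "card (fib X n s) \<le> card (ball1 X n)"
proof -
  have "inj_on fst (fib X n s)"
  proof (rule inj_onI)
    fix p p' assume "p \<in> fib X n s" "p' \<in> fib X n s" "fst p = fst p'"
    then show "p = p'"
      using fg_mult_inv_left[of "snd p" "fst p"] fg_mult_inv_left[of "snd p'" "fst p'"]
      by (auto simp: fib_def ball2_def free_group_elems_def tau_def prod_eq_iff)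
  qed
  moreover have "fst ` fib X n s \<subseteq> ball1 X n"
    by (auto simp: fib_def ball2_def ball1_def)
  ultimately show ?thesis by (intro card_inj_on_le) (auto simp: finite_ball1[OF assms])
qed

lemma reduced_replicate: "reduced (replicate i (l::'a letter))"
  by (induction i) (auto simp: reduced_Cons)

lemma fib_lower:
  assumes "finite X" "X \<noteq> {}" "s \<in> free_group_elems X" "length s \<le> n"
  shows "(n - length s) div 2 + 1 + length s \<le> card (fib X n s)"
proof -
  let ?r = "(n - length s) div 2" and ?j = "length s"
  obtain x where x: "x \<in> X" using assms(2) by blast
  define l where "l = (if s = [] then (x,True) else hd s)"
  have sr: "reduced s" "set s \<subseteq> X \<times> UNIV" using assms(3) by (auto simp: free_group_elems_def)
  have lX: "l \<in> X \<times> UNIV" using x sr(2) by (cases s) (auto simp: l_def)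
  define f where "f = (\<lambda>i. (replicate i l, replicate i l @ s))"
  define g where "g = (\<lambda>c. (fg_inv (take c s), drop c s))"
  have fin: "finite (fib X n s)"
  proof -
    have "fib X n s \<subseteq> ball1 X n \<times> ball1 X n" by (auto simp: fib_def ball2_def ball1_def)
    then show ?thesis by (rule finite_subset) (use finite_ball1[OF assms(1)] in auto)
  qed
  have "f ` {0..?r} \<subseteq> fib X n s"
  proof
    fix p assume "p \<in> f ` {0..?r}"
    then obtain i where i: "i \<le> ?r" "p = f i" by auto
    have "reduced (replicate i l @ s)"
    proof (cases "i = 0 \<or> s = []")
      case True then show ?thesis using sr(1) reduced_replicate[of i l] by auto
    next
      case False
      then have "last (replicate i l) = l" "hd s = l" by (auto simp: l_def)
      then show ?thesis unfolding reduced_append using sr(1) reduced_replicate by simp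
    qed
    moreover have "tau p = s" using fg_mult_cancel by (simp add: i f_def tau_def)
    moreover have "2 * i + ?j \<le> n" using i assms(4) by linarith
    ultimately show "p \<in> fib X n s" using lX sr
      by (auto simp: i f_def fib_def ball2_def free_group_elems_def reduced_replicate)
  qed
  moreover have "g ` {1..?j} \<subseteq> fib X n s"
  proof
    fix p assume "p \<in> g ` {1..?j}"
    then obtain c where c: "c \<le> ?j" "p = g c" by auto
    have "reduced (take c s @ drop c s)" using sr(1) by simp
    then have tr: "reduced (take c s)" "reduced (drop c s)"
      unfolding reduced_append by blast+
    have "set (take c s) \<subseteq> X \<times> UNIV" "set (drop c s) \<subseteq> X \<times> UNIV"
      using sr(2) by (auto dest: in_set_takeD in_set_dropD)
    moreover have "tau p = s" using sr(1) by (simp add: c g_def tau_def fg_mult_red)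
    ultimately show "p \<in> fib X n s" using tr c assms(4)
      by (auto simp: g_def fib_def ball2_def free_group_elems_def set_fg_inv)
  qed
  moreover have "f ` {0..?r} \<inter> g ` {1..?j} = {}"
  proof -
    have "f i \<noteq> g c" if "1 \<le> c" "c \<le> ?j" for i c
    proof
      assume "f i = g c"
      then have "length (fst (f i)) = length (fst (g c))" "length (snd (f i)) = length (snd (g c))" by auto
      then show False using that by (simp add: f_def g_def)
    qed
    then have "x \<notin> g ` {1..?j}" if "x \<in> f ` {0..?r}" for x using that by auto
    then show ?thesis by blast
  qed
  moreover have "inj_on f {0..?r}" by (auto simp: inj_on_def f_def)
  moreover have "inj_on g {1..?j}"
  proof (rule inj_onI)
    fix a b assume "a \<in> {1..?j}" "b \<in> {1..?j}" "g a = g b"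
    then have "length (fst (g a)) = length (fst (g b))" by simp
    with \<open>a \<in> _\<close> \<open>b \<in> _\<close> show "a = b" by (simp add: g_def)
  qed
  ultimately have "card (f ` {0..?r} \<union> g ` {1..?j}) = ?r + 1 + ?j"
    by (subst card_Un_disjoint) (simp_all add: card_image)
  moreover have "card (f ` {0..?r} \<union> g ` {1..?j}) \<le> card (fib X n s)"
    using \<open>f ` {0..?r} \<subseteq> fib X n s\<close> \<open>g ` {1..?j} \<subseteq> fib X n s\<close> fin by (intro card_mono) auto
  ultimately show ?thesis by simp
qed



definition preim :: "'a set \<Rightarrow> 'a word set \<Rightarrow> ('a word \<times> 'a word) set" where
  "preim X S = {p \<in> free_group_elems X \<times> free_group_elems X. tau p \<in> S}"
definition dA :: "'a set \<Rightarrow> 'a word set \<Rightarrow> nat \<Rightarrow> real" where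
  "dA X S n = real (card (S \<inter> ball1 X n)) / real (card (ball1 X n))"
definition dB :: "'a set \<Rightarrow> 'a word set \<Rightarrow> nat \<Rightarrow> real" where
  "dB X S n = real (card (preim X S \<inter> ball2 X n)) / real (card (ball2 X n))"

lemma finite_ball2: "finite X \<Longrightarrow> finite (ball2 X n)"
proof -
  assume f: "finite X"
  have "ball2 X n \<subseteq> ball1 X n \<times> ball1 X n" by (auto simp: ball2_def ball1_def)
  then show ?thesis by (rule finite_subset) (use finite_ball1[OF f] in auto)
qed

lemma card_pre_sum:
  assumes "finite X" "S \<subseteq> free_group_elems X"
  shows "card (preim X S \<inter> ball2 X n) = (\<Sum>s\<in>S \<inter> ball1 X n. card (fib X n s))"
proof -
  have "preim X S \<inter> ball2 X n = (\<Union>s\<in>S \<inter> ball1 X n. fib X n s)"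
  proof (intro equalityI subsetI)
    fix p assume p: "p \<in> preim X S \<inter> ball2 X n"
    then have "p \<in> free_group_elems X \<times> free_group_elems X" "length (fst p) + length (snd p) \<le> n"
      by (auto simp: ball2_def)
    then have "tau p \<in> ball1 X n" using tau_F2[of p X] by (auto simp: ball1_def)
    then show "p \<in> (\<Union>s\<in>S \<inter> ball1 X n. fib X n s)" using p
      by (auto simp: preim_def fib_def)
  qed (auto simp: preim_def fib_def ball2_def)
  moreover have "card (\<Union>s\<in>S \<inter> ball1 X n. fib X n s) = (\<Sum>s\<in>S \<inter> ball1 X n. card (fib X n s))"
    by (rule card_UN_disjoint) (use finite_ball1[OF assms(1)] finite_ball2[OF assms(1)] in \<open>auto simp: fib_def intro: finite_subset\<close>)
  ultimately show ?thesis by simp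
qed

lemma card_ball2_sum:
  assumes "finite X"
  shows "card (ball2 X n) = (\<Sum>s\<in>ball1 X n. card (fib X n s))"
proof -
  have "preim X (free_group_elems X) \<inter> ball2 X n = ball2 X n"
    using tau_F2 by (auto simp: preim_def ball2_def)
  moreover have "free_group_elems X \<inter> ball1 X n = ball1 X n" by (auto simp: ball1_def)
  ultimately show ?thesis using card_pre_sum[OF assms, of "free_group_elems X" n] by simp
qed

lemma fib_lower_real:
  assumes "finite X" "X \<noteq> {}" "s \<in> ball1 X n"
  shows "real (n+1) / 2 \<le> real (card (fib X n s))"
proof -
  have s: "s \<in> free_group_elems X" "length s \<le> n" using assms(3) by (auto simp: ball1_def)
  have "n + 1 \<le> 2 * ((n - length s) div 2 + 1 + length s)" using s(2) by presburger
  also have "\<dots> \<le> 2 * card (fib X n s)" using fib_lower[OF assms(1,2) s] by simp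
  finally have "real (n + 1) \<le> real (2 * card (fib X n s))" by (simp only: of_nat_le_iff)
  then show ?thesis by simp
qed

lemma ball1_pos: "0 < card (ball1 X n)" if "finite X"
proof -
  have "[] \<in> ball1 X n" by (simp add: ball1_def free_group_elems_def)
  then show ?thesis using finite_ball1[OF that] by (auto simp: card_gt_0_iff)
qed

lemma sums_bounds:
  assumes "finite X" "X \<noteq> {}" "S \<subseteq> free_group_elems X"
  shows "real (card (S \<inter> ball1 X n)) * (real (n+1) / 2) \<le> real (card (preim X S \<inter> ball2 X n))"
    "real (card (ball1 X n)) * (real (n+1) / 2) \<le> real (card (ball2 X n))"
proof -
  have "real (card (S \<inter> ball1 X n)) * (real (n+1) / 2) = (\<Sum>s\<in>S \<inter> ball1 X n. real (n+1) / 2)" by simp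
  also have "\<dots> \<le> (\<Sum>s\<in>S \<inter> ball1 X n. real (card (fib X n s)))"
    by (rule sum_mono) (use fib_lower_real[OF assms(1,2)] in auto)
  also have "\<dots> = real (card (preim X S \<inter> ball2 X n))" by (simp add: card_pre_sum[OF assms(1,3)])
  finally show "real (card (S \<inter> ball1 X n)) * (real (n+1) / 2) \<le> real (card (preim X S \<inter> ball2 X n))" .
  have "real (card (ball1 X n)) * (real (n+1) / 2) = (\<Sum>s\<in>ball1 X n. real (n+1) / 2)" by simp
  also have "\<dots> \<le> (\<Sum>s\<in>ball1 X n. real (card (fib X n s)))"
    by (rule sum_mono) (use fib_lower_real[OF assms(1,2)] in auto)
  also have "\<dots> = real (card (ball2 X n))" by (simp add: card_ball2_sum[OF assms(1)])
  finally show "real (card (ball1 X n)) * (real (n+1) / 2) \<le> real (card (ball2 X n))" .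
qed

lemma compare_k1:
  assumes "finite X" "card X = 1" "S \<subseteq> free_group_elems X"
  shows "dA X S n \<le> 4 * dB X S n" "dB X S n \<le> 4 * dA X S n"
proof -
  have Xne: "X \<noteq> {}" using assms(2) by auto
  define a where "a = real (card (S \<inter> ball1 X n))"
  define N where "N = real (card (ball1 X n))"
  define P where "P = real (card (preim X S \<inter> ball2 X n))"
  define T where "T = real (card (ball2 X n))"
  have N: "N = 2 * real n + 1" using card_ball1_k1[OF assms(1,2)] by (simp add: N_def)
  have a0: "0 \<le> a" by (simp add: a_def)
  have P1: "a * (real (n+1) / 2) \<le> P" and T1: "N * (real (n+1) / 2) \<le> T"
    using sums_bounds[OF assms(1) Xne assms(3), of n] by (simp_all add: a_def P_def N_def T_def)
  have P2: "P \<le> a * N"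
  proof -
    have "P = (\<Sum>s\<in>S \<inter> ball1 X n. real (card (fib X n s)))"
      by (simp add: P_def card_pre_sum[OF assms(1,3)])
    also have "\<dots> \<le> (\<Sum>s\<in>S \<inter> ball1 X n. N)"
      by (rule sum_mono) (use fib_upper1[OF assms(1)] in \<open>auto simp: N_def\<close>)
    finally show ?thesis by (simp add: a_def)
  qed
  have T2: "T \<le> N * N"
  proof -
    have "T = (\<Sum>s\<in>ball1 X n. real (card (fib X n s)))"
      by (simp add: T_def card_ball2_sum[OF assms(1)])
    also have "\<dots> \<le> (\<Sum>s\<in>ball1 X n. N)"
      by (rule sum_mono) (use fib_upper1[OF assms(1)] in \<open>auto simp: N_def\<close>)
    finally show ?thesis by (simp add: N_def)
  qed
  have "0 < N * (real (n+1) / 2)" using N by simp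
  then have Tpos: "0 < T" using T1 by linarith
  have Npos: "0 < N" using N by simp
  have dA: "dA X S n = a / N" and dB: "dB X S n = P / T"
    by (simp_all add: dA_def dB_def a_def N_def P_def T_def)
  have "a * T \<le> a * (N * N)" using T2 a0 by (simp add: mult_left_mono)
  also have "\<dots> \<le> 4 * (a * (real (n+1) / 2)) * N" using N a0 by (simp add: algebra_simps mult_left_mono)
  also have "\<dots> \<le> 4 * P * N" using P1 N by (simp add: mult_right_mono)
  finally have "a * T \<le> 4 * P * N" .
  then show "dA X S n \<le> 4 * dB X S n" using Tpos Npos
    by (simp add: dA dB divide_le_eq le_divide_eq mult.commute mult.left_commute)
  have "P * N \<le> a * N * N" using P2 N by (simp add: mult_right_mono)
  also have "\<dots> \<le> 4 * a * (N * (real (n+1) / 2))" using N a0 by (simp add: algebra_simps mult_left_mono)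
  also have "\<dots> \<le> 4 * a * T" by (rule mult_left_mono[OF T1]) (simp add: a0)
  finally have "P * N \<le> 4 * a * T" .
  then show "dB X S n \<le> 4 * dA X S n" using Tpos Npos
    by (simp add: dA dB divide_le_eq le_divide_eq mult.commute mult.left_commute)
qed



lemma geo_rev_bound:
  fixes \<rho> :: real assumes "0 \<le> \<rho>" "\<rho> < 1"
  shows "(\<Sum>j\<le>n. \<rho> ^ (n - j)) \<le> 1 / (1 - \<rho>)"
proof -
  have "(\<Sum>j\<le>n. \<rho> ^ (n - j)) = (\<Sum>j<Suc n. \<rho> ^ (Suc n - Suc j))"
    by (simp add: lessThan_Suc_atMost)
  also have "\<dots> = (\<Sum>j<Suc n. \<rho> ^ j)" by (rule sum.nat_diff_reindex)
  also have "\<dots> = (1 - \<rho> ^ Suc n) / (1 - \<rho>)" using assms by (subst sum_gp_strict) simp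
  also have "\<dots> \<le> 1 / (1 - \<rho>)" using assms by (intro divide_right_mono) auto
  finally show ?thesis .
qed



lemma sum_by_length:
  fixes h :: "nat \<Rightarrow> real"
  assumes "finite U" "\<And>s. s \<in> U \<Longrightarrow> length s \<le> n"
  shows "(\<Sum>s\<in>U. h (length s)) = (\<Sum>j\<le>n. real (card {s\<in>U. length s = j}) * h j)"
proof -
  have "(\<Sum>s\<in>U. h (length s)) = (\<Sum>j\<in>{..n}. \<Sum>s\<in>{x. x \<in> U \<and> length x = j}. h (length s))"
    by (rule sum.group[symmetric]) (use assms in auto)
  also have "\<dots> = (\<Sum>j\<le>n. real (card {s\<in>U. length s = j}) * h j)"
    by (rule sum.cong) auto
  finally show ?thesis .
qed

lemma compare_k2:
  assumes "finite X" "card X \<ge> 2" "S \<subseteq> free_group_elems X"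
  defines "\<rho> \<equiv> 1 / sqrt (real (2 * card X - 1))"
  shows "0 \<le> \<rho>" "\<rho> < 1"
    "real (card (preim X S \<inter> ball2 X n)) \<le> 9 * real (n+1) * real (2 * card X - 1) ^ n * (\<Sum>j\<le>n. \<rho> ^ (n - j) * dA X S j)"
proof -
  let ?g = "2 * card X - 1"
  define \<gamma> where "\<gamma> = sqrt (real ?g)"
  have g3: "?g \<ge> 3" using assms(2) by linarith
  have \<gamma>1: "\<gamma> > 1" using g3 by (simp add: \<gamma>_def)
  have \<gamma>sq: "\<gamma> ^ 2 = real ?g" by (simp add: \<gamma>_def)
  have \<rho>: "\<rho> = 1 / \<gamma>" by (simp add: \<rho>_def \<gamma>_def)
  show "0 \<le> \<rho>" using \<gamma>1 \<rho> by simp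
  show "\<rho> < 1" using \<gamma>1 \<rho> by simp
  have Xne: "X \<noteq> {}" using assms(2) by auto
  have fibb: "real (card (fib X n s)) \<le> 3 * real (n+1) * \<gamma> ^ (n - length s)" if "s \<in> ball1 X n" for s
  proof -
    let ?r = "(n - length s) div 2"
    have ls: "length s \<le> n" using that by (simp add: ball1_def)
    have "card (fib X n s) \<le> (length s + 1) * card (ball1 X ?r)" by (rule fib_upper2[OF assms(1)])
    also have "\<dots> \<le> (n + 1) * (3 * ?g ^ ?r)"
      using ls card_ball1_k2[OF assms(1,2), of ?r] by (intro mult_mono) auto
    finally have "real (card (fib X n s)) \<le> real ((n + 1) * (3 * ?g ^ ?r))" by (simp only: of_nat_le_iff)
    also have "\<dots> = 3 * real (n+1) * \<gamma> ^ (2 * ?r)" by (simp add: power_mult \<gamma>sq algebra_simps)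
    also have "\<dots> \<le> 3 * real (n+1) * \<gamma> ^ (n - length s)"
      using \<gamma>1 by (intro mult_left_mono power_increasing) auto
    finally show ?thesis .
  qed
  have cj: "real (card {s\<in>S \<inter> ball1 X n. length s = j}) \<le> dA X S j * (3 * real ?g ^ j)" if "j \<le> n" for j
  proof -
    have "card {s\<in>S \<inter> ball1 X n. length s = j} \<le> card (S \<inter> ball1 X j)"
      by (rule card_mono) (use finite_ball1[OF assms(1)] in \<open>auto simp: ball1_def\<close>)
    then have "real (card {s\<in>S \<inter> ball1 X n. length s = j}) \<le> dA X S j * real (card (ball1 X j))"
      using ball1_pos[OF assms(1), of j] by (simp add: dA_def)
    also have "\<dots> \<le> dA X S j * (3 * real ?g ^ j)"
    proof (rule mult_left_mono)
      have "card (ball1 X j) \<le> 3 * ?g ^ j" by (rule card_ball1_k2[OF assms(1,2)])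
      then show "real (card (ball1 X j)) \<le> 3 * real ?g ^ j" by (metis of_nat_le_iff of_nat_mult of_nat_numeral of_nat_power)
    qed (simp add: dA_def)
    finally show ?thesis .
  qed
  have key: "real ?g ^ j * \<gamma> ^ (n - j) = real ?g ^ n * \<rho> ^ (n - j)" if "j \<le> n" for j
  proof -
    have "\<gamma> ^ (n - j) * \<gamma> ^ (n - j) = real ?g ^ (n - j)"
      by (metis \<gamma>sq power2_eq_square power_mult_distrib)
    moreover have "real ?g ^ n = real ?g ^ j * real ?g ^ (n - j)"
      using that by (metis le_add_diff_inverse power_add)
    ultimately have "real ?g ^ n = real ?g ^ j * (\<gamma> ^ (n - j) * \<gamma> ^ (n - j))" by simp
    then show ?thesis using \<gamma>1 by (simp add: \<rho> power_one_over field_simps)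
  qed
  have "real (card (preim X S \<inter> ball2 X n)) = (\<Sum>s\<in>S \<inter> ball1 X n. real (card (fib X n s)))"
    by (simp add: card_pre_sum[OF assms(1,3)])
  also have "\<dots> \<le> (\<Sum>s\<in>S \<inter> ball1 X n. 3 * real (n+1) * \<gamma> ^ (n - length s))"
    by (rule sum_mono) (use fibb in auto)
  also have "\<dots> = (\<Sum>j\<le>n. real (card {s\<in>S \<inter> ball1 X n. length s = j}) * (3 * real (n+1) * \<gamma> ^ (n - j)))"
    by (rule sum_by_length) (use finite_ball1[OF assms(1)] in \<open>auto simp: ball1_def\<close>)
  also have "\<dots> \<le> (\<Sum>j\<le>n. dA X S j * (3 * real ?g ^ j) * (3 * real (n+1) * \<gamma> ^ (n - j)))"
    by (rule sum_mono, rule mult_right_mono) (use cj \<gamma>1 in auto)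
  also have "\<dots> = (\<Sum>j\<le>n. 9 * real (n+1) * (real ?g ^ j * \<gamma> ^ (n - j)) * dA X S j)"
    by (rule sum.cong) (auto simp: algebra_simps)
  also have "\<dots> = (\<Sum>j\<le>n. 9 * real (n+1) * real ?g ^ n * (\<rho> ^ (n - j) * dA X S j))"
  proof (rule sum.cong[OF refl])
    fix j assume "j \<in> {..n}"
    then have "j \<le> n" by simp
    show "9 * real (n+1) * (real ?g ^ j * \<gamma> ^ (n - j)) * dA X S j = 9 * real (n+1) * real ?g ^ n * (\<rho> ^ (n - j) * dA X S j)"
      by (simp only: key[OF \<open>j \<le> n\<close>] mult.assoc)
  qed
  also have "\<dots> = 9 * real (n+1) * real ?g ^ n * (\<Sum>j\<le>n. \<rho> ^ (n - j) * dA X S j)"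
    by (simp add: sum_distrib_left)
  finally show "real (card (preim X S \<inter> ball2 X n)) \<le> 9 * real (n+1) * real ?g ^ n * (\<Sum>j\<le>n. \<rho> ^ (n - j) * dA X S j)" .
qed



lemma term_le_conv:
  fixes a :: "nat \<Rightarrow> real"
  assumes "\<And>j. 0 \<le> a j" "0 \<le> \<rho>"
  shows "a n \<le> (\<Sum>j\<le>n. \<rho> ^ (n - j) * a j)"
proof -
  have "\<rho> ^ (n - n) * a n \<le> (\<Sum>j\<le>n. \<rho> ^ (n - j) * a j)"
    by (rule member_le_sum) (use assms in auto)
  then show ?thesis by simp
qed

lemma dA_nonneg: "0 \<le> dA X S n" by (simp add: dA_def)
lemma dB_nonneg: "0 \<le> dB X S n" by (simp add: dB_def)

lemma compare_empty:
  fixes X :: "'a set"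
  assumes "X = {}"
  shows "dA X S n = dB X S n"
proof -
  have F: "free_group_elems X = {[]}"
  proof (intro equalityI subsetI)
    fix w assume "w \<in> free_group_elems X"
    then have "set w \<subseteq> {}" using assms by (simp add: free_group_elems_def)
    then show "w \<in> {[]}" by simp
  qed (simp add: free_group_elems_def)
  have B1: "ball1 X n = {[]}" unfolding ball1_def F by auto
  have B2: "ball2 X n = {([],[])}" unfolding ball2_def F by auto
  have t: "tau ([]::'a word,[]) = []" by (simp add: tau_def fg_mult_def)
  have "preim X S \<inter> ball2 X n = (if [] \<in> S then {([],[])} else {})"
    unfolding B2 preim_def F using t by auto
  moreover have "S \<inter> ball1 X n = (if [] \<in> S then {[]} else {})" using B1 by auto
  ultimately show ?thesis by (simp add: dA_def dB_def B1 B2)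
qed

lemma compare:
  assumes "finite X"
  shows "\<exists>C \<rho>. 0 < C \<and> 0 \<le> \<rho> \<and> \<rho> < (1::real) \<and> (\<forall>S. S \<subseteq> free_group_elems X \<longrightarrow>
     (\<forall>n. dA X S n \<le> C * dB X S n \<and> dB X S n \<le> C * (\<Sum>j\<le>n. \<rho> ^ (n - j) * dA X S j)))"
proof (cases "card X \<ge> 2")
  case False
  show ?thesis
  proof (cases "X = {}")
    case True
    show ?thesis
    proof (rule exI[of _ 1], rule exI[of _ 0], intro conjI allI impI)
      fix S n
      show "dA X S n \<le> 1 * dB X S n" using compare_empty[OF True] by simp
      show "dB X S n \<le> 1 * (\<Sum>j\<le>n. 0 ^ (n - j) * dA X S j)"
        using term_le_conv[of "dA X S" 0 n, OF dA_nonneg order_refl] compare_empty[OF True, of S n] by simp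
    qed simp_all
  next
    case ne: False
    have "card X \<noteq> 0" using ne assms by simp
    then have k1: "card X = 1" using False by linarith
    show ?thesis
    proof (rule exI[of _ 4], rule exI[of _ 0], intro conjI allI impI)
      fix S n assume S: "S \<subseteq> free_group_elems X"
      show "dA X S n \<le> 4 * dB X S n" by (rule compare_k1[OF assms k1 S])
      have "dB X S n \<le> 4 * dA X S n" by (rule compare_k1[OF assms k1 S])
      also have "\<dots> \<le> 4 * (\<Sum>j\<le>n. 0 ^ (n - j) * dA X S j)"
        by (rule mult_left_mono[OF term_le_conv[OF dA_nonneg order_refl]]) simp
      finally show "dB X S n \<le> 4 * (\<Sum>j\<le>n. 0 ^ (n - j) * dA X S j)" .
    qed simp_all
  qed
next
  case True
  let ?g = "2 * card X - 1"
  define \<rho> where "\<rho> = 1 / sqrt (real ?g)"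
  have \<rho>: "0 \<le> \<rho>" "\<rho> < 1" using compare_k2(1,2)[OF assms True subset_refl] by (simp_all add: \<rho>_def)
  define K where "K = 1 / (1 - \<rho>)"
  have K: "K > 0" using \<rho> by (simp add: K_def)
  have Xne: "X \<noteq> {}" using True by auto
  show ?thesis
  proof (rule exI[of _ "18 * K"], rule exI[of _ \<rho>], intro conjI allI impI)
    show "0 < 18 * K" using K by simp
    show "0 \<le> \<rho>" "\<rho> < 1" by (fact \<rho>)+
    fix S n assume S: "S \<subseteq> free_group_elems X"
    define G where "G = real ?g ^ n"
    define m where "m = real (n+1)"
    define a where "a = real (card (S \<inter> ball1 X n))"
    define N where "N = real (card (ball1 X n))"
    define P where "P = real (card (preim X S \<inter> ball2 X n))"
    define T where "T = real (card (ball2 X n))"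
    define Q where "Q = (\<Sum>j\<le>n. \<rho> ^ (n - j) * dA X S j)"
    have Gpos: "G > 0" using True by (simp add: G_def)
    have mpos: "m > 0" by (simp add: m_def)
    have Q0: "Q \<ge> 0" using \<rho> by (simp add: Q_def sum_nonneg dA_nonneg)
    have a0: "a \<ge> 0" by (simp add: a_def)
    have P0: "P \<ge> 0" by (simp add: P_def)
    have GN: "G \<le> N"
    proof -
      have "?g ^ n \<le> card (ball1 X n)" by (rule card_ball1_lower[OF assms Xne])
      then show ?thesis unfolding G_def N_def by (metis of_nat_le_iff of_nat_power)
    qed
    have h1: "P \<le> 9 * m * G * Q"
      using compare_k2(3)[OF assms True S, of n] by (simp add: P_def m_def G_def Q_def \<rho>_def)
    have h2: "T \<le> 9 * m * G * K"
    proof -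
      have Fb: "preim X (free_group_elems X) \<inter> ball2 X n = ball2 X n"
        using tau_F2 by (auto simp: preim_def ball2_def)
      have dF: "dA X (free_group_elems X) j = 1" for j
      proof -
        have "free_group_elems X \<inter> ball1 X j = ball1 X j" by (auto simp: ball1_def)
        then show ?thesis using ball1_pos[OF assms, of j] by (simp add: dA_def)
      qed
      have "T \<le> 9 * m * G * (\<Sum>j\<le>n. \<rho> ^ (n - j))"
        using compare_k2(3)[OF assms True subset_refl, of n]
        by (simp add: T_def m_def G_def \<rho>_def Fb dF)
      also have "\<dots> \<le> 9 * m * G * K"
        by (rule mult_left_mono) (use geo_rev_bound[OF \<rho>, of n] Gpos mpos in \<open>auto simp: K_def\<close>)
      finally show ?thesis .
    qed
    have h34: "a * (m / 2) \<le> P" "N * (m / 2) \<le> T"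
      using sums_bounds[OF assms Xne S, of n] by (simp_all add: a_def P_def N_def T_def m_def)
    have "G * (m / 2) \<le> N * (m / 2)" by (rule mult_right_mono) (use GN mpos in auto)
    then have h3: "G * (m / 2) \<le> T" using h34(2) by linarith
    have "0 < G * (m / 2)" using Gpos mpos by simp
    then have Tpos: "T > 0" using h3 by linarith
    have dA: "dA X S n = a / N" and dB: "dB X S n = P / T"
      by (simp_all add: dA_def dB_def a_def N_def P_def T_def)
    have "P / T \<le> (9 * m * G * Q) / (G * (m / 2))"
      by (rule frac_le) (use h1 h3 Gpos mpos Q0 in auto)
    also have "\<dots> = 18 * Q" using Gpos mpos by (simp add: divide_simps)
    also have "\<dots> \<le> 18 * K * Q"
    proof -
      have "1 \<le> K" using \<rho> by (simp add: K_def)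
      then show ?thesis using Q0 by (simp add: mult_right_mono)
    qed
    finally show "dB X S n \<le> 18 * K * (\<Sum>j\<le>n. \<rho> ^ (n - j) * dA X S j)" by (simp add: dB Q_def)
    have "a / N \<le> a / G" using GN Gpos a0 by (intro divide_left_mono) auto
    also have "\<dots> = 18 * K * ((a * (m / 2)) / (9 * m * G * K))" using Gpos mpos K by (simp add: divide_simps)
    also have "\<dots> \<le> 18 * K * (P / T)"
      by (rule mult_left_mono, rule frac_le) (use h34(1) h2 Tpos K a0 mpos P0 in auto)
    finally show "dA X S n \<le> 18 * K * dB X S n" by (simp add: dA dB)
  qed
qed



lemma sum_rev_conv:
  fixes a :: "nat \<Rightarrow> real"
  shows "(\<Sum>j\<le>n. \<rho> ^ (n - j) * a j) = (\<Sum>k\<le>n. \<rho> ^ k * a (n - k))"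
  by (rule sum.reindex_bij_witness[of _ "\<lambda>k. n - k" "\<lambda>j. n - j"]) auto

lemma conv_tendsto:
  fixes a :: "nat \<Rightarrow> real"
  assumes a0: "\<And>j. 0 \<le> a j" and lim: "a \<longlonglongrightarrow> 0" and \<rho>: "0 \<le> \<rho>" "\<rho> < 1"
  shows "(\<lambda>n. \<Sum>j\<le>n. \<rho> ^ (n - j) * a j) \<longlonglongrightarrow> 0"
proof -
  have "Bseq a" using convergent_imp_Bseq[of a] lim by (auto simp: convergent_def)
  then obtain M where M: "M > 0" "\<And>n. norm (a n) \<le> M" by (rule BseqE) blast
  define f where "f = (\<lambda>k n. if k \<le> n then \<rho> ^ k * a (n - k) else 0)"
  have eq: "(\<Sum>j\<le>n. \<rho> ^ (n - j) * a j) = suminf (\<lambda>k. f k n)" for n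
  proof -
    have "suminf (\<lambda>k. f k n) = (\<Sum>k\<le>n. f k n)" by (rule suminf_finite) (auto simp: f_def)
    also have "\<dots> = (\<Sum>k\<le>n. \<rho> ^ k * a (n - k))" by (rule sum.cong) (auto simp: f_def)
    finally show ?thesis by (simp add: sum_rev_conv)
  qed
  have lk: "(\<lambda>n. f k n) \<longlonglongrightarrow> 0" for k
  proof -
    have "(\<lambda>n. a (n - k)) \<longlonglongrightarrow> 0"
      by (rule filterlim_compose[OF lim filterlim_minus_const_nat_at_top])
    then have "(\<lambda>n. \<rho> ^ k * a (n - k)) \<longlonglongrightarrow> 0" by (auto intro: tendsto_mult_right_zero)
    moreover have "eventually (\<lambda>n. \<rho> ^ k * a (n - k) = f k n) sequentially"
      using eventually_ge_at_top[of k] by eventually_elim (simp add: f_def)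
    ultimately show ?thesis by (rule Lim_transform_eventually)
  qed
  have bnd: "eventually (\<lambda>(k,n). norm (f k n) \<le> M * \<rho> ^ k) (at_top \<times>\<^sub>F sequentially)"
  proof (rule always_eventually, clarify)
    fix k n
    show "norm (f k n) \<le> M * \<rho> ^ k"
    proof (cases "k \<le> n")
      case True
      have "\<rho> ^ k * \<bar>a (n - k)\<bar> \<le> \<rho> ^ k * M"
        using M(2)[of "n - k"] \<rho> by (intro mult_left_mono) auto
      then show ?thesis using True \<rho> by (simp add: f_def abs_mult mult.commute)
    qed (use \<rho> M(1) in \<open>auto simp: f_def\<close>)
  qed
  have "summable (\<lambda>k. M * \<rho> ^ k)" using \<rho> by (intro summable_mult summable_geometric) auto
  from tannerys_theorem[OF lk bnd this] have "(\<lambda>n. suminf (\<lambda>k. f k n)) \<longlonglongrightarrow> suminf (\<lambda>k. 0::real)"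
    by simp
  then show ?thesis by (simp add: eq)
qed

lemma sandwich0:
  fixes f g :: "nat \<Rightarrow> real"
  assumes "\<And>n. 0 \<le> f n" "\<And>n. f n \<le> g n" "g \<longlonglongrightarrow> 0"
  shows "f \<longlonglongrightarrow> 0"
  by (rule tendsto_sandwich[of "\<lambda>_. 0" f sequentially g]) (use assms in auto)

lemma exp_conv_tendsto:
  fixes a :: "nat \<Rightarrow> real"
  assumes a0: "\<And>j. 0 \<le> a j" and \<beta>: "\<beta> > 1" and lim: "(\<lambda>n. \<beta> ^ n * a n) \<longlonglongrightarrow> 0"
    and \<rho>: "0 \<le> \<rho>" "\<rho> < 1"
  shows "\<exists>\<beta>'>1. (\<lambda>n. \<beta>' ^ n * (\<Sum>j\<le>n. \<rho> ^ (n - j) * a j)) \<longlonglongrightarrow> 0"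
proof -
  define b where "b = min \<beta> (2 / (1 + \<rho>))"
  have b1: "b > 1" using \<beta> \<rho> by (simp add: b_def field_simps)
  have bb: "b \<le> \<beta>" by (simp add: b_def)
  have rb: "\<rho> * b < 1"
  proof -
    have "\<rho> * b \<le> \<rho> * (2 / (1 + \<rho>))" using \<rho> by (intro mult_left_mono) (auto simp: b_def)
    also have "\<dots> < 1" using \<rho> by (simp add: field_simps)
    finally show ?thesis .
  qed
  have l1: "(\<lambda>j. b ^ j * a j) \<longlonglongrightarrow> 0"
  proof (rule sandwich0)
    show "0 \<le> b ^ n * a n" for n using b1 a0 by simp
    show "b ^ n * a n \<le> \<beta> ^ n * a n" for n
      using b1 bb a0 by (intro mult_right_mono power_mono) auto
  qed (rule lim)
  have "(\<lambda>n. \<Sum>j\<le>n. (\<rho> * b) ^ (n - j) * (b ^ j * a j)) \<longlonglongrightarrow> 0"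
    by (rule conv_tendsto[OF _ l1]) (use b1 a0 \<rho> rb in auto)
  moreover have "(\<Sum>j\<le>n. (\<rho> * b) ^ (n - j) * (b ^ j * a j)) = b ^ n * (\<Sum>j\<le>n. \<rho> ^ (n - j) * a j)" for n
  proof -
    have "(\<Sum>j\<le>n. (\<rho> * b) ^ (n - j) * (b ^ j * a j)) = (\<Sum>j\<le>n. b ^ n * (\<rho> ^ (n - j) * a j))"
    proof (rule sum.cong[OF refl])
      fix j assume "j \<in> {..n}"
      then have "b ^ n = b ^ (n - j) * b ^ j" by (simp add: power_add[symmetric])
      then show "(\<rho> * b) ^ (n - j) * (b ^ j * a j) = b ^ n * (\<rho> ^ (n - j) * a j)"
        by (simp add: power_mult_distrib)
    qed
    then show ?thesis by (simp add: sum_distrib_left)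
  qed
  ultimately show ?thesis using b1 by auto
qed



lemma negl_iff: "negligible B S \<longleftrightarrow> (\<lambda>n. real (card (S \<inter> B n)) / real (card (B n))) \<longlonglongrightarrow> 0"
  by (simp add: negligible_def)

lemma exp_negl_iff: "exp_negligible B S \<longleftrightarrow> (\<exists>\<beta>>1. (\<lambda>n. \<beta> ^ n * (real (card (S \<inter> B n)) / real (card (B n)))) \<longlonglongrightarrow> 0)"
  by (simp add: exp_negligible_def)

lemma negl_mono:
  assumes "\<And>n. finite (B n)" "A \<subseteq> A'" "negligible B A'"
  shows "negligible B A"
proof -
  have le: "real (card (A \<inter> B n)) / real (card (B n)) \<le> real (card (A' \<inter> B n)) / real (card (B n))" for n
    using assms(1,2) by (intro divide_right_mono) (auto intro: card_mono)
  show ?thesis using assms(3) unfolding negl_iff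
    by (rule sandwich0[rotated 2]) (use le in auto)
qed

lemma exp_negl_mono:
  assumes "\<And>n. finite (B n)" "A \<subseteq> A'" "exp_negligible B A'"
  shows "exp_negligible B A"
proof -
  have le: "real (card (A \<inter> B n)) / real (card (B n)) \<le> real (card (A' \<inter> B n)) / real (card (B n))" for n
    using assms(1,2) by (intro divide_right_mono) (auto intro: card_mono)
  obtain \<beta> where \<beta>: "\<beta> > 1" "(\<lambda>n. \<beta> ^ n * (real (card (A' \<inter> B n)) / real (card (B n)))) \<longlonglongrightarrow> 0"
    using assms(3) unfolding exp_negl_iff by blast
  have "(\<lambda>n. \<beta> ^ n * (real (card (A \<inter> B n)) / real (card (B n)))) \<longlonglongrightarrow> 0"
  proof (rule sandwich0[OF _ _ \<beta>(2)])
    fix n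
    show "0 \<le> \<beta> ^ n * (real (card (A \<inter> B n)) / real (card (B n)))" using \<beta>(1) by simp
    show "\<beta> ^ n * (real (card (A \<inter> B n)) / real (card (B n))) \<le> \<beta> ^ n * (real (card (A' \<inter> B n)) / real (card (B n)))"
      by (rule mult_left_mono[OF le]) (use \<beta>(1) in simp)
  qed
  then show ?thesis unfolding exp_negl_iff using \<beta>(1) by blast
qed

lemma part1:
  assumes "finite X" "S \<subseteq> free_group_elems X"
  shows "(negligible (ball1 X) S \<longleftrightarrow> negligible (ball2 X) (preim X S))
       \<and> (exp_negligible (ball1 X) S \<longleftrightarrow> exp_negligible (ball2 X) (preim X S))"
proof -
  obtain C \<rho> where C: "0 < C" "0 \<le> \<rho>" "\<rho> < (1::real)"
    and cmp: "\<And>n. dA X S n \<le> C * dB X S n" "\<And>n. dB X S n \<le> C * (\<Sum>j\<le>n. \<rho> ^ (n - j) * dA X S j)"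
    using compare[OF assms(1)] assms(2) by blast
  have nA: "negligible (ball1 X) S \<longleftrightarrow> dA X S \<longlonglongrightarrow> 0" by (simp add: negl_iff dA_def[abs_def])
  have nB: "negligible (ball2 X) (preim X S) \<longleftrightarrow> dB X S \<longlonglongrightarrow> 0" by (simp add: negl_iff dB_def[abs_def])
  have eA: "exp_negligible (ball1 X) S \<longleftrightarrow> (\<exists>\<beta>>1. (\<lambda>n. \<beta> ^ n * dA X S n) \<longlonglongrightarrow> 0)"
    by (simp add: exp_negl_iff dA_def)
  have eB: "exp_negligible (ball2 X) (preim X S) \<longleftrightarrow> (\<exists>\<beta>>1. (\<lambda>n. \<beta> ^ n * dB X S n) \<longlonglongrightarrow> 0)"
    by (simp add: exp_negl_iff dB_def)
  have 1: "dA X S \<longlonglongrightarrow> 0" if "dB X S \<longlonglongrightarrow> 0"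
    by (rule sandwich0[OF dA_nonneg cmp(1)]) (use tendsto_mult_right_zero[OF that, of C] in simp)
  have 2: "dB X S \<longlonglongrightarrow> 0" if "dA X S \<longlonglongrightarrow> 0"
    by (rule sandwich0[OF dB_nonneg cmp(2)])
       (rule tendsto_mult_right_zero, rule conv_tendsto[OF dA_nonneg that C(2,3)])
  have 3: "\<exists>\<beta>>1. (\<lambda>n. \<beta> ^ n * dA X S n) \<longlonglongrightarrow> 0" if h: "\<exists>\<beta>>1. (\<lambda>n. \<beta> ^ n * dB X S n) \<longlonglongrightarrow> 0"
  proof -
    obtain \<beta> where \<beta>: "\<beta> > 1" "(\<lambda>n. \<beta> ^ n * dB X S n) \<longlonglongrightarrow> 0" using h by blast
    have "(\<lambda>n. \<beta> ^ n * dA X S n) \<longlonglongrightarrow> 0"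
    proof (rule sandwich0)
      show "0 \<le> \<beta> ^ n * dA X S n" for n using \<beta> dA_nonneg[of X S n] by simp
      show "\<beta> ^ n * dA X S n \<le> C * (\<beta> ^ n * dB X S n)" for n
        using mult_left_mono[OF cmp(1)[of n], of "\<beta> ^ n"] \<beta> by (simp add: algebra_simps)
      show "(\<lambda>n. C * (\<beta> ^ n * dB X S n)) \<longlonglongrightarrow> 0" by (rule tendsto_mult_right_zero[OF \<beta>(2)])
    qed
    then show ?thesis using \<beta> by blast
  qed
  have 4: "\<exists>\<beta>>1. (\<lambda>n. \<beta> ^ n * dB X S n) \<longlonglongrightarrow> 0" if h: "\<exists>\<beta>>1. (\<lambda>n. \<beta> ^ n * dA X S n) \<longlonglongrightarrow> 0"
  proof -
    obtain \<beta> where \<beta>: "\<beta> > 1" "(\<lambda>n. \<beta> ^ n * dA X S n) \<longlonglongrightarrow> 0" using h by blast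
    obtain b where b: "b > 1" "(\<lambda>n. b ^ n * (\<Sum>j\<le>n. \<rho> ^ (n - j) * dA X S j)) \<longlonglongrightarrow> 0"
      using exp_conv_tendsto[OF dA_nonneg \<beta> C(2,3)] by blast
    have "(\<lambda>n. b ^ n * dB X S n) \<longlonglongrightarrow> 0"
    proof (rule sandwich0)
      show "0 \<le> b ^ n * dB X S n" for n using b dB_nonneg[of X S n] by simp
      show "b ^ n * dB X S n \<le> C * (b ^ n * (\<Sum>j\<le>n. \<rho> ^ (n - j) * dA X S j))" for n
        using mult_left_mono[OF cmp(2)[of n], of "b ^ n"] b by (simp add: algebra_simps)
      show "(\<lambda>n. C * (b ^ n * (\<Sum>j\<le>n. \<rho> ^ (n - j) * dA X S j))) \<longlonglongrightarrow> 0"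
        by (rule tendsto_mult_right_zero[OF b(2)])
    qed
    then show ?thesis using b by blast
  qed
  show ?thesis unfolding nA nB eA eB using 1 2 3 4 by blast
qed

theorem lemma3p5:
  fixes X :: "'a set" and S :: "'a word set" and T :: "('a word \<times> 'a word) set"
  assumes "finite X"
    and "S \<subseteq> free_group_elems X"
    and "T \<subseteq> free_group_elems X \<times> free_group_elems X"
  defines "F \<equiv> free_group_elems X"
    and "F2 \<equiv> free_group_elems X \<times> free_group_elems X"
    and "pre \<equiv> {p \<in> free_group_elems X \<times> free_group_elems X. tau p \<in> S}"
  shows "(negligible (ball1 X) S \<longleftrightarrow> negligible (ball2 X) pre)
       \<and> (exp_negligible (ball1 X) S \<longleftrightarrow> exp_negligible (ball2 X) pre)
       \<and> (generic F (ball1 X) S \<longleftrightarrow> generic F2 (ball2 X) pre)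
       \<and> (exp_generic F (ball1 X) S \<longleftrightarrow> exp_generic F2 (ball2 X) pre)
       \<and> (generic F2 (ball2 X) T \<longrightarrow> generic F (ball1 X) (tau ` T))
       \<and> (exp_generic F2 (ball2 X) T \<longrightarrow> exp_generic F (ball1 X) (tau ` T))
       \<and> (negligible (ball1 X) (tau ` T) \<longrightarrow> negligible (ball2 X) T)
       \<and> (exp_negligible (ball1 X) (tau ` T) \<longrightarrow> exp_negligible (ball2 X) T)"
proof -
  have pre: "pre = preim X S" by (simp add: pre_def preim_def)
  have f2: "\<And>n. finite (ball2 X n)" by (rule finite_ball2[OF assms(1)])
  have P1: "negligible (ball1 X) S \<longleftrightarrow> negligible (ball2 X) pre"
           "exp_negligible (ball1 X) S \<longleftrightarrow> exp_negligible (ball2 X) pre"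
    using part1[OF assms(1,2)] by (simp_all add: pre)
  have cF: "F2 - pre = preim X (F - S)"
    using tau_F2 by (auto simp: pre preim_def F_def F2_def)
  have P2: "generic F (ball1 X) S \<longleftrightarrow> generic F2 (ball2 X) pre"
           "exp_generic F (ball1 X) S \<longleftrightarrow> exp_generic F2 (ball2 X) pre"
    using part1[OF assms(1), of "F - S"] by (auto simp: generic_def exp_generic_def cF F_def)
  have tT: "tau ` T \<subseteq> F" using assms(3) tau_F2 by (auto simp: F_def)
  have sub3: "preim X (F - tau ` T) \<subseteq> F2 - T" by (auto simp: preim_def F2_def)
  have P3: "generic F2 (ball2 X) T \<longrightarrow> generic F (ball1 X) (tau ` T)"
  proof
    assume "generic F2 (ball2 X) T"
    then have "negligible (ball2 X) (preim X (F - tau ` T))"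
      unfolding generic_def by (rule negl_mono[OF f2 sub3])
    then show "generic F (ball1 X) (tau ` T)"
      using part1[OF assms(1), of "F - tau ` T"] by (auto simp: generic_def F_def)
  qed
  have P4: "exp_generic F2 (ball2 X) T \<longrightarrow> exp_generic F (ball1 X) (tau ` T)"
  proof
    assume "exp_generic F2 (ball2 X) T"
    then have "exp_negligible (ball2 X) (preim X (F - tau ` T))"
      unfolding exp_generic_def by (rule exp_negl_mono[OF f2 sub3])
    then show "exp_generic F (ball1 X) (tau ` T)"
      using part1[OF assms(1), of "F - tau ` T"] by (auto simp: exp_generic_def F_def)
  qed
  have sub5: "T \<subseteq> preim X (tau ` T)" using assms(3) by (auto simp: preim_def)
  have P5: "negligible (ball1 X) (tau ` T) \<longrightarrow> negligible (ball2 X) T"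
  proof
    assume "negligible (ball1 X) (tau ` T)"
    then have "negligible (ball2 X) (preim X (tau ` T))"
      using part1[OF assms(1) tT[unfolded F_def]] by blast
    then show "negligible (ball2 X) T" by (rule negl_mono[OF f2 sub5])
  qed
  have P6: "exp_negligible (ball1 X) (tau ` T) \<longrightarrow> exp_negligible (ball2 X) T"
  proof
    assume "exp_negligible (ball1 X) (tau ` T)"
    then have "exp_negligible (ball2 X) (preim X (tau ` T))"
      using part1[OF assms(1) tT[unfolded F_def]] by blast
    then show "exp_negligible (ball2 X) T" by (rule exp_negl_mono[OF f2 sub5])
  qed
  show ?thesis using P1 P2 P3 P4 P5 P6 by blast
qed

end
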